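(* For every finite simple graph $G$, $$\alpha_{\mathcal S}(G)=\inf_A\min\big\{W_A(x)\ \big|\ \lambda_{\min}(A)^{-1}\le x\le\lambda_{\max}(A)^{-1}\big\},$$ the infimum taken over all real symmetric weighted adjacency matrices $A$ of $G$.
   Context: $G$ has vertex set $\{1,\dots,n\}$. A weighted adjacency matrix is a real symmetric $A$ with $A_{ii}=0$ and $A_{ij}=0$ for non-adjacent $i\ne j$. $\mathcal S_n=\{\boldsymbol v\in\mathbb R^n:\langle\boldsymbol 1,\boldsymbol v\rangle=|\boldsymbol v|^2\}$ ($\boldsymbol 1$ the all-ones vector), and $\alpha_{\mathcal S}(G)=\inf_A\sup\{|\boldsymbol v|^2:\boldsymbol v\in\mathcal S_n,\ \langle\boldsymbol v,A\boldsymbol v\rangle=0\}$. For $A=\sum_{\lambda\in\sigma(A)}\lambda P_\lambda$, $W_A(x)=\sum_{\lambda\in\sigma(A)}\frac{\langle\boldsymbol 1,P_\lambda\boldsymbol 1\rangle}{1-\lambda x}$, terms with $\langle\boldsymbol 1,P_\lambda\boldsymbol 1\rangle=0$ omitted, and value $+\infty$ at a pole. $\lambda_{\min}(A),\lambda_{\max}(A)$ are the extreme eigenvalues; for $A=0$ the inner minimum is taken to equal $n$. *)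

theory Defs
  imports "HOL-Analysis.Analysis"
begin

text \<open>Simple graphs on a finite vertex type 'n (playing the role of {1..n}):
  a symmetric irreflexive edge relation.\<close>
definition simple_graph :: "('n \<Rightarrow> 'n \<Rightarrow> bool) \<Rightarrow> bool" where
  "simple_graph E \<longleftrightarrow> (\<forall>i j. E i j \<longleftrightarrow> E j i) \<and> (\<forall>i. \<not> E i i)"

definition weighted_adj :: "('n::finite \<Rightarrow> 'n \<Rightarrow> bool) \<Rightarrow> real^'n^'n \<Rightarrow> bool" where
  "weighted_adj E A \<longleftrightarrow> transpose A = A \<and> (\<forall>i. A $ i $ i = 0)
      \<and> (\<forall>i j. i \<noteq> j \<and> \<not> E i j \<longrightarrow> A $ i $ j = 0)"

definition S_set :: "(real^'n::finite) set" where
  "S_set = {v. (1::real^'n) \<bullet> v = (norm v)\<^sup>2}"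

definition alpha_S :: "('n::finite \<Rightarrow> 'n \<Rightarrow> bool) \<Rightarrow> ereal" where
  "alpha_S E = (INF A\<in>{A. weighted_adj E A}.
      Sup {ereal ((norm v)\<^sup>2) | v. v \<in> S_set \<and> v \<bullet> (A *v v) = 0})"

definition mat_spectrum :: "real^'n^'n \<Rightarrow> real set" where
  "mat_spectrum A = {\<mu>. \<exists>v. v \<noteq> 0 \<and> A *v v = \<mu> *\<^sub>R v}"

definition eigenspace :: "real^'n^'n \<Rightarrow> real \<Rightarrow> (real^'n) set" where
  "eigenspace A \<mu> = {v. A *v v = \<mu> *\<^sub>R v}"

definition orth_proj :: "(real^'n) set \<Rightarrow> real^'n \<Rightarrow> real^'n" where
  "orth_proj U x = (THE p. p \<in> U \<and> (\<forall>u\<in>U. (x - p) \<bullet> u = 0))"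

definition spec_proj :: "real^'n^'n \<Rightarrow> real \<Rightarrow> real^'n \<Rightarrow> real^'n" where
  "spec_proj A \<mu> = orth_proj (eigenspace A \<mu>)"

definition spec_weight :: "real^'n::finite^'n \<Rightarrow> real \<Rightarrow> real" where
  "spec_weight A \<mu> = (1::real^'n) \<bullet> spec_proj A \<mu> 1"

definition W_fun :: "real^'n::finite^'n \<Rightarrow> real \<Rightarrow> ereal" where
  "W_fun A x = (if \<exists>\<mu>\<in>mat_spectrum A. spec_weight A \<mu> \<noteq> 0 \<and> 1 - \<mu> * x = 0 then \<infinity>
     else ereal (\<Sum>\<mu>\<in>{\<mu>\<in>mat_spectrum A. spec_weight A \<mu> \<noteq> 0}. spec_weight A \<mu> / (1 - \<mu> * x)))"

definition lambda_min :: "real^'n^'n \<Rightarrow> real" where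
  "lambda_min A = Min (mat_spectrum A)"

definition lambda_max :: "real^'n^'n \<Rightarrow> real" where
  "lambda_max A = Max (mat_spectrum A)"

definition W_min :: "real^'n::finite^'n \<Rightarrow> ereal" where
  "W_min A = (if A = 0 then ereal (real CARD('n))
     else Inf (W_fun A ` {inverse (lambda_min A) .. inverse (lambda_max A)}))"

end

theory Submission
  imports Defs
begin

lemma sym_inner:
  fixes A :: "real^'n::finite^'n"
  assumes "transpose A = A"
  shows "x \<bullet> (A *v y) = (A *v x) \<bullet> y"
  by (metis assms dot_lmul_matrix transpose_matrix_vector)

lemma quad_aux:
  fixes N c :: real
  assumes "c + 1 \<noteq> 0"
  shows "2 * (- N / (c + 1)) * N + (- N / (c + 1))^2 * c = N^2 * (c - 2 * (c + 1)) / (c + 1)^2"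
proof -
  define d where "d = c + 1"
  have d: "d \<noteq> 0" using assms d_def by simp
  have "2 * (- N / d) * N + (- N / d)^2 * (d - 1) = N^2 * ((d - 1) - 2 * d) / d^2"
    using d by (simp add: field_simps power2_eq_square)
  then show ?thesis by (simp add: d_def)
qed

lemma invariant_eigvec:
  fixes A :: "real^'n::finite^'n"
  assumes sym: "transpose A = A" and V: "subspace V"
    and inv: "\<And>x. x \<in> V \<Longrightarrow> A *v x \<in> V" and ne: "V \<noteq> {0}"
  shows "\<exists>y \<mu>. y \<in> V \<and> y \<noteq> 0 \<and> A *v y = \<mu> *\<^sub>R y"
proof -
  let ?K = "V \<inter> sphere 0 1"
  have cK: "compact ?K" using closed_subspace[OF V] compact_sphere
    by (simp add: closed_Int_compact)
  obtain y0 where y0: "y0 \<in> V" "y0 \<noteq> 0" using ne subspace_0[OF V] by blast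
  have "y0 /\<^sub>R norm y0 \<in> ?K" using y0 V by (simp add: subspace_scale)
  then have neK: "?K \<noteq> {}" by blast
  have cont: "continuous_on ?K (\<lambda>y. y \<bullet> (A *v y))"
    by (intro continuous_intros matrix_vector_mult_linear_continuous_on continuous_on_id)
  obtain w where w: "w \<in> ?K" and wmax: "\<And>y. y \<in> ?K \<Longrightarrow> y \<bullet> (A *v y) \<le> w \<bullet> (A *v w)"
    using continuous_attains_sup[OF cK neK cont] by blast
  define \<mu> where "\<mu> = w \<bullet> (A *v w)"
  have wV: "w \<in> V" and wn: "norm w = 1" using w by auto
  have ww: "w \<bullet> w = 1" using wn by (simp add: dot_square_norm)
  have pos: "0 \<le> y \<bullet> (\<mu> *\<^sub>R y - A *v y)" if yV: "y \<in> V" for y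
  proof (cases "y = 0")
    case True then show ?thesis by simp
  next
    case False
    let ?u = "y /\<^sub>R norm y"
    have "?u \<in> ?K" using yV False V by (simp add: subspace_scale)
    then have "?u \<bullet> (A *v ?u) \<le> \<mu>" using wmax \<mu>_def by blast
    then have "(y \<bullet> (A *v y)) / (norm y)^2 \<le> \<mu>"
      by (simp add: matrix_vector_mult_scaleR power2_eq_square divide_simps)
    then have "y \<bullet> (A *v y) \<le> \<mu> * (norm y)^2" using False
      by (simp add: divide_simps)
    then show ?thesis by (simp add: inner_diff_right dot_square_norm)
  qed
  define b where "b = \<mu> *\<^sub>R w - A *v w"
  have bV: "b \<in> V" unfolding b_def using wV inv V
    by (simp add: subspace_diff subspace_scale)
  define c where "c = b \<bullet> (\<mu> *\<^sub>R b - A *v b)"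
  have c0: "0 \<le> c" using pos[OF bV] c_def by simp
  have wBw: "w \<bullet> b = 0" unfolding b_def \<mu>_def
    by (simp add: inner_diff_right ww)
  have symb: "w \<bullet> (\<mu> *\<^sub>R b - A *v b) = b \<bullet> b"
  proof -
    have "w \<bullet> (\<mu> *\<^sub>R b - A *v b) = \<mu> * (w \<bullet> b) - (A *v w) \<bullet> b"
      using sym_inner[OF sym, of w b] by (simp add: inner_diff_right)
    also have "\<dots> = - ((A *v w) \<bullet> (\<mu> *\<^sub>R w - A *v w))" using wBw b_def by simp
    also have "\<dots> = - \<mu> * \<mu> + (A *v w) \<bullet> (A *v w)"
      by (simp add: inner_diff_right \<mu>_def inner_commute)
    also have "\<dots> = b \<bullet> b" unfolding b_def
      by (simp add: inner_diff_right inner_diff_left ww \<mu>_def inner_commute)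
    finally show ?thesis .
  qed
  have expand: "(w + t *\<^sub>R b) \<bullet> (\<mu> *\<^sub>R (w + t *\<^sub>R b) - A *v (w + t *\<^sub>R b))
      = 2 * t * (b \<bullet> b) + t^2 * c" for t
  proof -
    have "(w + t *\<^sub>R b) \<bullet> (\<mu> *\<^sub>R (w + t *\<^sub>R b) - A *v (w + t *\<^sub>R b))
       = w \<bullet> (\<mu> *\<^sub>R w - A *v w) + t * (w \<bullet> (\<mu> *\<^sub>R b - A *v b))
         + t * (b \<bullet> (\<mu> *\<^sub>R w - A *v w)) + t * t * (b \<bullet> (\<mu> *\<^sub>R b - A *v b))"
      by (simp add: matrix_vector_right_distrib matrix_vector_mult_scaleR
          inner_add_left inner_add_right inner_diff_right algebra_simps scaleR_add_right)
    also have "\<dots> = 2 * t * (b \<bullet> b) + t^2 * c"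
      using wBw symb unfolding c_def b_def[symmetric]
      by (simp add: power2_eq_square b_def[symmetric])
    finally show ?thesis .
  qed
  have "b \<bullet> b = 0"
  proof (rule ccontr)
    assume nz: "b \<bullet> b \<noteq> 0"
    then have N: "b \<bullet> b > 0" by (simp add: order_less_le)
    define t where "t = - (b \<bullet> b) / (c + 1)"
    have "w + t *\<^sub>R b \<in> V" using wV bV V by (simp add: subspace_add subspace_scale)
    from pos[OF this] have "0 \<le> 2 * t * (b \<bullet> b) + t^2 * c" by (simp add: expand)
    moreover have "2 * t * (b \<bullet> b) + t^2 * c < 0"
    proof -
      have "2 * t * (b \<bullet> b) + t^2 * c = (b \<bullet> b)^2 * (c - 2 * (c + 1)) / (c + 1)^2"
      proof -
        have cp: "c + 1 \<noteq> 0" using c0 by simp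
        show ?thesis unfolding t_def using quad_aux[OF cp] by simp
      qed
      also have "\<dots> < 0" using N c0
        by (intro divide_neg_pos mult_pos_neg) auto
      finally show ?thesis .
    qed
    ultimately show False by simp
  qed
  then have "A *v w = \<mu> *\<^sub>R w" using b_def by simp
  moreover have "w \<noteq> 0" using wn by auto
  ultimately show ?thesis using wV by blast
qed


lemma subspace_eigenspace: "subspace (eigenspace A \<mu>)"
  unfolding subspace_def eigenspace_def
  by (simp add: matrix_vector_right_distrib matrix_vector_mult_scaleR scaleR_add_right)

lemma orth_proj_props:
  fixes U :: "(real^'n::finite) set"
  assumes U: "subspace U"
  shows "orth_proj U x \<in> U \<and> (\<forall>u\<in>U. (x - orth_proj U x) \<bullet> u = 0)"
proof -
  obtain y z where y: "y \<in> span U" and z: "\<And>w. w \<in> span U \<Longrightarrow> orthogonal z w"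
    and xyz: "x = y + z"
    using orthogonal_subspace_decomp_exists[of U x] by metis
  have sp: "span U = U" using U by (simp add: span_eq_iff)
  have ex: "y \<in> U \<and> (\<forall>u\<in>U. (x - y) \<bullet> u = 0)"
  proof
    show "y \<in> U" using y sp by simp
    show "\<forall>u\<in>U. (x - y) \<bullet> u = 0"
    proof
      fix u assume "u \<in> U"
      then have "orthogonal z u" using z sp by simp
      moreover have "x - y = z" using xyz by simp
      ultimately show "(x - y) \<bullet> u = 0" by (simp add: orthogonal_def)
    qed
  qed
  have un: "p = y" if p: "p \<in> U \<and> (\<forall>u\<in>U. (x - p) \<bullet> u = 0)" for p
  proof -
    have d: "p - y \<in> U" using p ex U by (simp add: subspace_diff)
    have "(x - y) \<bullet> (p - y) - (x - p) \<bullet> (p - y) = 0" using p ex d by simp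
    then have "(p - y) \<bullet> (p - y) = 0" by (simp add: inner_diff_left)
    then show ?thesis by simp
  qed
  have "orth_proj U x = y" unfolding orth_proj_def
    by (rule the_equality) (use ex un in blast)+
  then show ?thesis using ex by simp
qed

lemma spec_proj_in: "spec_proj A \<mu> x \<in> eigenspace A \<mu>"
  using orth_proj_props[OF subspace_eigenspace] unfolding spec_proj_def by blast

lemma spec_proj_orth: "u \<in> eigenspace A \<mu> \<Longrightarrow> (x - spec_proj A \<mu> x) \<bullet> u = 0"
  using orth_proj_props[OF subspace_eigenspace] unfolding spec_proj_def by blast

lemma spec_proj_inner: "u \<in> eigenspace A \<mu> \<Longrightarrow> x \<bullet> u = spec_proj A \<mu> x \<bullet> u"
  using spec_proj_orth[of u A \<mu> x] by (simp add: inner_diff_left)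

lemma eig_orth:
  fixes A :: "real^'n::finite^'n"
  assumes sym: "transpose A = A" and x: "x \<in> eigenspace A \<mu>" and y: "y \<in> eigenspace A \<nu>"
    and ne: "\<mu> \<noteq> \<nu>"
  shows "x \<bullet> y = 0"
proof -
  have "\<mu> * (x \<bullet> y) = (A *v x) \<bullet> y" using x by (simp add: eigenspace_def)
  also have "\<dots> = x \<bullet> (A *v y)" using sym_inner[OF sym] by simp
  also have "\<dots> = \<nu> * (x \<bullet> y)" using y by (simp add: eigenspace_def)
  finally show ?thesis using ne by simp
qed

lemma eigenspace_zero: "\<mu> \<notin> mat_spectrum A \<Longrightarrow> y \<in> eigenspace A \<mu> \<Longrightarrow> y = 0"
  unfolding mat_spectrum_def eigenspace_def by blast

lemma finite_spectrum:
  fixes A :: "real^'n::finite^'n"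
  assumes sym: "transpose A = A"
  shows "finite (mat_spectrum A)"
proof -
  let ?L = "mat_spectrum A"
  define v where "v \<mu> = (SOME v. v \<noteq> 0 \<and> A *v v = \<mu> *\<^sub>R v)" for \<mu>
  have v: "v \<mu> \<noteq> 0 \<and> v \<mu> \<in> eigenspace A \<mu>" if "\<mu> \<in> ?L" for \<mu>
    using someI_ex[of "\<lambda>v. v \<noteq> 0 \<and> A *v v = \<mu> *\<^sub>R v"] that
    unfolding v_def mat_spectrum_def eigenspace_def by blast
  have inj: "inj_on v ?L"
  proof (rule inj_onI)
    fix \<mu> \<nu> assume a: "\<mu> \<in> ?L" "\<nu> \<in> ?L" "v \<mu> = v \<nu>"
    show "\<mu> = \<nu>"
    proof (rule ccontr)
      assume "\<mu> \<noteq> \<nu>"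
      then have "v \<mu> \<bullet> v \<nu> = 0" using eig_orth[OF sym] v a by blast
      then show False using a v by simp
    qed
  qed
  have "pairwise orthogonal (v ` ?L)"
    unfolding pairwise_def orthogonal_def using eig_orth[OF sym] v by blast
  moreover have "0 \<notin> v ` ?L" using v by auto
  ultimately have "independent (v ` ?L)" by (rule pairwise_orthogonal_independent)
  then have "finite (v ` ?L)" by (rule independent_imp_finite)
  then show ?thesis using inj finite_imageD by blast
qed

lemma spectral_decomp:
  fixes A :: "real^'n::finite^'n"
  assumes sym: "transpose A = A"
  shows "v = (\<Sum>\<mu>\<in>mat_spectrum A. spec_proj A \<mu> v)"
proof -
  let ?L = "mat_spectrum A"
  have fin: "finite ?L" using finite_spectrum[OF sym] .
  define r where "r = v - (\<Sum>\<mu>\<in>?L. spec_proj A \<mu> v)"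
  define V where "V = {r. \<forall>\<nu> y. y \<in> eigenspace A \<nu> \<longrightarrow> r \<bullet> y = 0}"
  have rV: "r \<in> V" unfolding V_def mem_Collect_eq
  proof (intro allI impI)
    fix \<nu> y assume y: "y \<in> eigenspace A \<nu>"
    show "r \<bullet> y = 0"
    proof (cases "\<nu> \<in> ?L")
      case False then show ?thesis using eigenspace_zero[OF False y] by simp
    next
      case True
      have "(\<Sum>\<mu>\<in>?L. spec_proj A \<mu> v) \<bullet> y = (\<Sum>\<mu>\<in>?L. spec_proj A \<mu> v \<bullet> y)"
        by (simp add: inner_sum_left)
      also have "\<dots> = (\<Sum>\<mu>\<in>?L. if \<mu> = \<nu> then v \<bullet> y else 0)"
      proof (rule sum.cong)
        fix \<mu> assume "\<mu> \<in> ?L"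
        show "spec_proj A \<mu> v \<bullet> y = (if \<mu> = \<nu> then v \<bullet> y else 0)"
          using eig_orth[OF sym spec_proj_in y] spec_proj_inner[OF y, of v] by auto
      qed simp
      also have "\<dots> = v \<bullet> y" using True fin by simp
      finally show ?thesis unfolding r_def by (simp add: inner_diff_left)
    qed
  qed
  have sub: "subspace V" unfolding V_def subspace_def
    by (auto simp: inner_add_left)
  have inv: "A *v x \<in> V" if "x \<in> V" for x
  proof -
    have "(A *v x) \<bullet> y = 0" if y: "y \<in> eigenspace A \<nu>" for \<nu> y
    proof -
      have "(A *v x) \<bullet> y = x \<bullet> (A *v y)" using sym_inner[OF sym] by simp
      also have "\<dots> = \<nu> * (x \<bullet> y)" using y by (simp add: eigenspace_def)
      also have "\<dots> = 0" using \<open>x \<in> V\<close> y unfolding V_def by simp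
      finally show ?thesis .
    qed
    then show ?thesis unfolding V_def by blast
  qed
  have "V = {0}"
  proof (rule ccontr)
    assume "V \<noteq> {0}"
    then obtain y \<mu> where y: "y \<in> V" "y \<noteq> 0" "A *v y = \<mu> *\<^sub>R y"
      using invariant_eigvec[OF sym sub inv] by blast
    then have "y \<bullet> y = 0" unfolding V_def eigenspace_def by blast
    then show False using y by simp
  qed
  then have "r = 0" using rV by blast
  then show ?thesis unfolding r_def by simp
qed

lemma orth_sum_inner:
  fixes A :: "real^'n::finite^'n"
  assumes sym: "transpose A = A" and fin: "finite L"
    and a: "\<And>\<mu>. \<mu> \<in> L \<Longrightarrow> a \<mu> \<in> eigenspace A \<mu>"
    and b: "\<And>\<mu>. \<mu> \<in> L \<Longrightarrow> b \<mu> \<in> eigenspace A \<mu>"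
  shows "(\<Sum>\<mu>\<in>L. a \<mu>) \<bullet> (\<Sum>\<mu>\<in>L. b \<mu>) = (\<Sum>\<mu>\<in>L. a \<mu> \<bullet> b \<mu>)"
proof -
  have "(\<Sum>\<mu>\<in>L. a \<mu>) \<bullet> (\<Sum>\<mu>\<in>L. b \<mu>) = (\<Sum>\<mu>\<in>L. \<Sum>\<nu>\<in>L. a \<mu> \<bullet> b \<nu>)"
    by (simp only: inner_sum_left inner_sum_right) (rule sum.swap)
  also have "\<dots> = (\<Sum>\<mu>\<in>L. \<Sum>\<nu>\<in>L. if \<nu> = \<mu> then a \<mu> \<bullet> b \<mu> else 0)"
    by (intro sum.cong refl) (use eig_orth[OF sym] a b in metis)
  also have "\<dots> = (\<Sum>\<mu>\<in>L. a \<mu> \<bullet> b \<mu>)" using fin by simp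
  finally show ?thesis .
qed



lemma spec_weight_sq: "spec_weight A \<mu> = spec_proj A \<mu> 1 \<bullet> spec_proj A \<mu> 1"
  unfolding spec_weight_def using spec_proj_inner[OF spec_proj_in] by blast

lemma spec_weight_nonneg: "0 \<le> spec_weight A \<mu>"
  by (simp add: spec_weight_sq)

lemma spec_weight_zero: "spec_weight A \<mu> = 0 \<Longrightarrow> spec_proj A \<mu> 1 = 0"
  by (simp add: spec_weight_sq)

lemma quad_ids:
  fixes A :: "real^'n::finite^'n"
  assumes sym: "transpose A = A"
  shows "v \<bullet> v = (\<Sum>\<mu>\<in>mat_spectrum A. spec_proj A \<mu> v \<bullet> spec_proj A \<mu> v)"
    and "v \<bullet> (A *v v) = (\<Sum>\<mu>\<in>mat_spectrum A. \<mu> * (spec_proj A \<mu> v \<bullet> spec_proj A \<mu> v))"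
    and "1 \<bullet> v = (\<Sum>\<mu>\<in>mat_spectrum A. spec_proj A \<mu> 1 \<bullet> spec_proj A \<mu> v)"
proof -
  let ?L = "mat_spectrum A"
  have fin: "finite ?L" using finite_spectrum[OF sym] .
  have d: "v = (\<Sum>\<mu>\<in>?L. spec_proj A \<mu> v)" by (rule spectral_decomp[OF sym])
  have d1: "(1::real^'n) = (\<Sum>\<mu>\<in>?L. spec_proj A \<mu> 1)" by (rule spectral_decomp[OF sym])
  have in1: "\<And>\<mu>. spec_proj A \<mu> v \<in> eigenspace A \<mu>" by (rule spec_proj_in)
  have in2: "\<And>\<mu>. \<mu> *\<^sub>R spec_proj A \<mu> v \<in> eigenspace A \<mu>"
    using subspace_eigenspace spec_proj_in subspace_scale by blast
  have Av: "A *v v = (\<Sum>\<mu>\<in>?L. \<mu> *\<^sub>R spec_proj A \<mu> v)"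
    by (subst d) (simp add: vec.sum spec_proj_in[unfolded eigenspace_def, simplified])
  show "v \<bullet> v = (\<Sum>\<mu>\<in>?L. spec_proj A \<mu> v \<bullet> spec_proj A \<mu> v)"
    by (subst (1 2) d) (rule orth_sum_inner[OF sym fin in1 in1])
  show "v \<bullet> (A *v v) = (\<Sum>\<mu>\<in>?L. \<mu> * (spec_proj A \<mu> v \<bullet> spec_proj A \<mu> v))"
    unfolding Av by (subst (1) d) (simp add: orth_sum_inner[OF sym fin in1 in2])
  show "1 \<bullet> v = (\<Sum>\<mu>\<in>?L. spec_proj A \<mu> 1 \<bullet> spec_proj A \<mu> v)"
    by (subst d1, subst d) (rule orth_sum_inner[OF sym fin spec_proj_in in1])
qed

lemma axis_quad: "axis i 1 \<bullet> ((A::real^'n::finite^'n) *v axis j 1) = A $ i $ j"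
  by (simp add: inner_commute[of "axis i 1"] inner_axis matrix_vector_mul_component)

lemma semidef_zero:
  fixes A :: "real^'n::finite^'n"
  assumes sym: "transpose A = A" and diag: "\<forall>i. A $ i $ i = 0"
    and s: "s \<noteq> 0" and sd: "\<And>v. 0 \<le> s * (v \<bullet> (A *v v))"
  shows "A = 0"
proof -
  have "A $ i $ j = 0" for i j
  proof (cases "i = j")
    case True then show ?thesis using diag by simp
  next
    case False
    have tr: "A $ j $ i = A $ i $ j" using sym unfolding transpose_def
      by (metis vec_lambda_beta)
    define t where "t = - s * A $ i $ j"
    let ?v = "axis i 1 + t *\<^sub>R axis j (1::real)"
    have "?v \<bullet> (A *v ?v) = 2 * t * A $ i $ j"
      by (simp add: matrix_vector_right_distrib matrix_vector_mult_scaleR inner_add_left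
          inner_add_right axis_quad diag tr)
    then have "0 \<le> s * (2 * t * A $ i $ j)" using sd[of ?v] by simp
    then have "0 \<le> - 2 * (s * A $ i $ j)^2" unfolding t_def by (simp add: power2_eq_square algebra_simps)
    then have "(s * A $ i $ j)^2 = 0" by (smt (verit) zero_le_power2)
    then show ?thesis using s by simp
  qed
  then show ?thesis by (simp add: vec_eq_iff)
qed

lemma spectrum_signs:
  fixes A :: "real^'n::finite^'n"
  assumes sym: "transpose A = A" and diag: "\<forall>i. A $ i $ i = 0" and A0: "A \<noteq> 0"
  shows "\<exists>\<mu>\<in>mat_spectrum A. \<mu> < 0" and "\<exists>\<mu>\<in>mat_spectrum A. \<mu> > 0"
proof -
  let ?L = "mat_spectrum A"
  show "\<exists>\<mu>\<in>?L. \<mu> < 0"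
  proof (rule ccontr)
    assume "\<not> ?thesis"
    then have "\<And>v. 0 \<le> 1 * (v \<bullet> (A *v v))"
      by (simp add: quad_ids(2)[OF sym] sum_nonneg not_less)
    then show False using semidef_zero[OF sym diag, of 1] A0 by simp
  qed
  show "\<exists>\<mu>\<in>?L. \<mu> > 0"
  proof (rule ccontr)
    assume "\<not> ?thesis"
    then have "\<And>v. 0 \<le> (-1) * (v \<bullet> (A *v v))"
      by (simp add: quad_ids(2)[OF sym] sum_nonpos not_less mult_nonpos_nonneg)
    then show False using semidef_zero[OF sym diag, of "-1"] A0 by simp
  qed
qed

definition Lp :: "real^'n::finite^'n \<Rightarrow> real set" where
  "Lp A = {\<mu>\<in>mat_spectrum A. spec_weight A \<mu> \<noteq> 0}"

definition fW :: "real^'n::finite^'n \<Rightarrow> real \<Rightarrow> real" where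
  "fW A x = (\<Sum>\<mu>\<in>Lp A. spec_weight A \<mu> / (1 - \<mu> * x))"

definition gW :: "real^'n::finite^'n \<Rightarrow> real \<Rightarrow> real" where
  "gW A x = (\<Sum>\<mu>\<in>Lp A. \<mu> * spec_weight A \<mu> / (1 - \<mu> * x)^2)"

definition hW :: "real^'n::finite^'n \<Rightarrow> real \<Rightarrow> real" where
  "hW A x = (\<Sum>\<mu>\<in>Lp A. \<mu> * spec_weight A \<mu> * (\<Prod>\<nu>\<in>Lp A - {\<mu>}. (1 - \<nu> * x)^2))"

lemma W_fun_eq:
  assumes "\<forall>\<mu>\<in>Lp A. 0 < 1 - \<mu> * x"
  shows "W_fun A x = ereal (fW A x)"
  using assms unfolding W_fun_def fW_def Lp_def by force

lemma term_ineq: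
  fixes E X V c :: real
  assumes c: "c > 0" and h: "0 \<le> E - 2 * c * X + c^2 * V"
  shows "2 * X \<le> E / c + c * V"
proof -
  have "2 * X * c \<le> E + c * V * c" using h by (simp add: power2_eq_square algebra_simps)
  then show ?thesis using c by (simp add: field_simps)
qed

lemma weak:
  fixes A :: "real^'n::finite^'n"
  assumes sym: "transpose A = A"
    and cnn: "\<forall>\<mu>\<in>mat_spectrum A. 0 \<le> 1 - \<mu> * x"
    and v1: "1 \<bullet> v = v \<bullet> v" and v0: "v \<bullet> (A *v v) = 0"
  shows "ereal (v \<bullet> v) \<le> W_fun A x"
proof (cases "\<exists>\<mu>\<in>mat_spectrum A. spec_weight A \<mu> \<noteq> 0 \<and> 1 - \<mu> * x = 0")
  case True then show ?thesis unfolding W_fun_def by simp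
next
  case False
  let ?L = "mat_spectrum A"
  let ?P = "Lp A"
  have fin: "finite ?L" using finite_spectrum[OF sym] .
  have PL: "?P \<subseteq> ?L" unfolding Lp_def by blast
  have finP: "finite ?P" using fin PL finite_subset by blast
  have cpos: "\<forall>\<mu>\<in>?P. 0 < 1 - \<mu> * x"
  proof
    fix \<mu> assume m: "\<mu> \<in> ?P"
    then have m1: "\<mu> \<in> ?L" and m2: "spec_weight A \<mu> \<noteq> 0" unfolding Lp_def by auto
    have "1 - \<mu> * x \<noteq> 0" using False m1 m2 by blast
    moreover have "0 \<le> 1 - \<mu> * x" using cnn m1 by blast
    ultimately show "0 < 1 - \<mu> * x" by linarith
  qed
  define vv where "vv \<mu> = spec_proj A \<mu> v" for \<mu>
  define e where "e \<mu> = spec_proj A \<mu> 1" for \<mu>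
  define N where "N = v \<bullet> v"
  have N1: "N = (\<Sum>\<mu>\<in>?L. (1 - \<mu> * x) * (vv \<mu> \<bullet> vv \<mu>))"
  proof -
    have "N = v \<bullet> v - x * (v \<bullet> (A *v v))" using v0 N_def by simp
    also have "\<dots> = (\<Sum>\<mu>\<in>?L. vv \<mu> \<bullet> vv \<mu>) - x * (\<Sum>\<mu>\<in>?L. \<mu> * (vv \<mu> \<bullet> vv \<mu>))"
      unfolding vv_def using quad_ids(1,2)[OF sym, of v] by simp
    also have "\<dots> = (\<Sum>\<mu>\<in>?L. (1 - \<mu> * x) * (vv \<mu> \<bullet> vv \<mu>))"
      by (simp add: sum_distrib_left sum_subtractf[symmetric] algebra_simps)
    finally show ?thesis .
  qed
  have N2: "N = (\<Sum>\<mu>\<in>?P. e \<mu> \<bullet> vv \<mu>)"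
  proof -
    have "N = (\<Sum>\<mu>\<in>?L. e \<mu> \<bullet> vv \<mu>)" using quad_ids(3)[OF sym, of v] v1
      unfolding N_def e_def vv_def by simp
    also have "\<dots> = (\<Sum>\<mu>\<in>?P. e \<mu> \<bullet> vv \<mu>)"
      by (rule sum.mono_neutral_right[OF fin PL])
         (auto simp: Lp_def e_def dest: spec_weight_zero)
    finally show ?thesis .
  qed
  have ti: "2 * (e \<mu> \<bullet> vv \<mu>) \<le> spec_weight A \<mu> / (1 - \<mu> * x) + (1 - \<mu> * x) * (vv \<mu> \<bullet> vv \<mu>)"
    if "\<mu> \<in> ?P" for \<mu>
  proof (rule term_ineq)
    show "0 < 1 - \<mu> * x" using cpos that by blast
    have "0 \<le> (e \<mu> - (1 - \<mu> * x) *\<^sub>R vv \<mu>) \<bullet> (e \<mu> - (1 - \<mu> * x) *\<^sub>R vv \<mu>)" by simp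
    then show "0 \<le> spec_weight A \<mu> - 2 * (1 - \<mu> * x) * (e \<mu> \<bullet> vv \<mu>) + (1 - \<mu> * x)^2 * (vv \<mu> \<bullet> vv \<mu>)"
      by (simp add: spec_weight_sq e_def[symmetric] inner_diff_left inner_diff_right
          inner_commute power2_eq_square algebra_simps)
  qed
  have "2 * N \<le> (\<Sum>\<mu>\<in>?P. spec_weight A \<mu> / (1 - \<mu> * x) + (1 - \<mu> * x) * (vv \<mu> \<bullet> vv \<mu>))"
    unfolding N2 sum_distrib_left by (rule sum_mono) (use ti in auto)
  also have "\<dots> = fW A x + (\<Sum>\<mu>\<in>?P. (1 - \<mu> * x) * (vv \<mu> \<bullet> vv \<mu>))"
    by (simp add: fW_def sum.distrib)
  also have "\<dots> \<le> fW A x + N"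
  proof -
    have "(\<Sum>\<mu>\<in>?P. (1 - \<mu> * x) * (vv \<mu> \<bullet> vv \<mu>)) \<le> (\<Sum>\<mu>\<in>?L. (1 - \<mu> * x) * (vv \<mu> \<bullet> vv \<mu>))"
      by (rule sum_mono2[OF fin PL]) (use cnn in auto)
    then show ?thesis using N1 by simp
  qed
  finally have "N \<le> fW A x" by simp
  moreover have "W_fun A x = ereal (fW A x)" using W_fun_eq cpos by blast
  ultimately show ?thesis unfolding N_def by simp
qed

lemma finite_Lp: "transpose A = A \<Longrightarrow> finite (Lp (A::real^'n::finite^'n))"
  using finite_spectrum unfolding Lp_def by (metis (no_types, lifting) finite_subset mem_Collect_eq subsetI)

lemma frac_aux:
  fixes w m x :: real
  assumes "1 - m * x \<noteq> 0"
  shows "w / (1 - m * x) = w / (1 - m * x)^2 - x * (m * w / (1 - m * x)^2)"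
proof -
  define d where "d = 1 - m * x"
  have d: "d \<noteq> 0" using assms d_def by simp
  have "w / d^2 - x * (m * w / d^2) = w * (1 - m * x) / d^2" by (simp add: diff_divide_distrib[symmetric] algebra_simps)
  also have "\<dots> = w / d" using d by (simp add: d_def[symmetric] power2_eq_square)
  finally show ?thesis unfolding d_def by simp
qed

lemma construct:
  fixes A :: "real^'n::finite^'n"
  assumes sym: "transpose A = A"
    and cpos: "\<forall>\<mu>\<in>Lp A. 0 < 1 - \<mu> * x"
    and zA: "A *v z = \<mu>0 *\<^sub>R z" and z1: "1 \<bullet> z = 0"
    and ze: "\<forall>\<mu>\<in>Lp A. spec_proj A \<mu> 1 \<bullet> z = 0"
    and zc: "(1 - \<mu>0 * x) * (z \<bullet> z) = 0" and zg: "gW A x + \<mu>0 * (z \<bullet> z) = 0"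
  shows "\<exists>u. 1 \<bullet> u = u \<bullet> u \<and> u \<bullet> (A *v u) = 0 \<and> u \<bullet> u = fW A x"
proof -
  let ?P = "Lp A"
  have finP: "finite ?P" using finite_Lp[OF sym] .
  define c where "c \<mu> = 1 - \<mu> * x" for \<mu>
  define a where "a \<mu> = (1 / c \<mu>) *\<^sub>R spec_proj A \<mu> 1" for \<mu>
  define s where "s = (\<Sum>\<mu>\<in>?P. a \<mu>)"
  define u where "u = s + z"
  have ain: "a \<mu> \<in> eigenspace A \<mu>" for \<mu>
    unfolding a_def using subspace_eigenspace spec_proj_in subspace_scale by blast
  have ain2: "\<mu> *\<^sub>R a \<mu> \<in> eigenspace A \<mu>" for \<mu>
    using subspace_eigenspace ain subspace_scale by blast
  have Aa: "A *v a \<mu> = \<mu> *\<^sub>R a \<mu>" for \<mu> using ain unfolding eigenspace_def by simp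
  have As: "A *v s = (\<Sum>\<mu>\<in>?P. \<mu> *\<^sub>R a \<mu>)" unfolding s_def by (simp add: vec.sum Aa)
  have w: "1 \<bullet> spec_proj A \<mu> 1 = spec_weight A \<mu>" for \<mu> by (simp add: spec_weight_def)
  have aa: "a \<mu> \<bullet> a \<mu> = spec_weight A \<mu> / (c \<mu>)^2" for \<mu>
    unfolding a_def by (simp add: spec_weight_sq power2_eq_square)
  have s1: "1 \<bullet> s = fW A x"
    unfolding s_def fW_def inner_sum_right a_def by (simp add: w c_def)
  have ss: "s \<bullet> s = (\<Sum>\<mu>\<in>?P. spec_weight A \<mu> / (c \<mu>)^2)"
    unfolding s_def by (simp add: orth_sum_inner[OF sym finP ain ain] aa)
  have sAs: "s \<bullet> (A *v s) = gW A x"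
    unfolding As unfolding s_def
    by (simp add: orth_sum_inner[OF sym finP ain ain2] aa gW_def c_def)
  have zs: "z \<bullet> s = 0"
    unfolding s_def inner_sum_right a_def using ze by (simp add: inner_commute)
  have sAz: "s \<bullet> (A *v z) = 0" using zs zA by (simp add: inner_commute)
  have zAs: "z \<bullet> (A *v s) = 0" using sym_inner[OF sym, of z s] zA zs by simp
  have uAu: "u \<bullet> (A *v u) = 0"
  proof -
    have sz: "s \<bullet> z = 0" using zs by (simp add: inner_commute)
    show ?thesis
      unfolding u_def using sAs sAz zAs zA zg sz
      by (simp add: matrix_vector_right_distrib inner_add_left inner_add_right)
  qed
  have uu: "u \<bullet> u = s \<bullet> s + z \<bullet> z"
    unfolding u_def using zs by (simp add: inner_add_left inner_add_right inner_commute)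
  have fid: "fW A x = s \<bullet> s - x * gW A x"
  proof -
    have "fW A x = (\<Sum>\<mu>\<in>?P. spec_weight A \<mu> / (c \<mu>)^2 - x * (\<mu> * spec_weight A \<mu> / (c \<mu>)^2))"
      unfolding fW_def
    proof (rule sum.cong[OF refl])
      fix \<mu> assume "\<mu> \<in> ?P"
      then have cn: "c \<mu> \<noteq> 0" using cpos c_def by force
      show "spec_weight A \<mu> / (1 - \<mu> * x) = spec_weight A \<mu> / (c \<mu>)^2 - x * (\<mu> * spec_weight A \<mu> / (c \<mu>)^2)"
        using cn frac_aux unfolding c_def by blast
    qed
    also have "\<dots> = s \<bullet> s - x * gW A x"
      by (simp add: ss gW_def c_def sum_subtractf sum_distrib_left)
    finally show ?thesis .
  qed
  have e1: "gW A x = - \<mu>0 * (z \<bullet> z)" using zg by simp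
  have e2: "x * gW A x = - (\<mu>0 * x * (z \<bullet> z))" unfolding e1 by simp
  have e3: "z \<bullet> z - \<mu>0 * x * (z \<bullet> z) = 0" using zc by (simp add: algebra_simps)
  have "u \<bullet> u = fW A x" using uu fid e2 e3 by linarith
  moreover have "1 \<bullet> u = fW A x" unfolding u_def using s1 z1 by (simp add: inner_add_right)
  ultimately show ?thesis using uAu by metis
qed

lemma c_nonneg:
  fixes l L \<mu> x :: real
  assumes "l < 0" "0 < L" "l \<le> \<mu>" "\<mu> \<le> L" "inverse l \<le> x" "x \<le> inverse L"
  shows "0 \<le> 1 - \<mu> * x"
proof (cases "\<mu> \<ge> 0")
  case True
  have "\<mu> * x \<le> \<mu> * inverse L" using True assms by (simp add: mult_left_mono)
  also have "\<dots> \<le> L * inverse L" using True assms by (intro mult_right_mono) auto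
  also have "\<dots> = 1" using assms by simp
  finally show ?thesis by simp
next
  case False
  have "\<mu> * x \<le> \<mu> * inverse l" using False assms by (simp add: mult_left_mono_neg)
  also have "\<dots> \<le> l * inverse l" using False assms by (intro mult_right_mono_neg) auto
  also have "\<dots> = 1" using assms by simp
  finally show ?thesis by simp
qed
lemma c_pos:
  fixes l L \<mu> x :: real
  assumes "l < 0" "0 < L" "l \<le> \<mu>" "\<mu> \<le> L" "inverse l < x" "x < inverse L"
  shows "0 < 1 - \<mu> * x"
proof (cases "\<mu> > 0")
  case True
  have "\<mu> * x < \<mu> * inverse L" using True assms by (simp add: mult_strict_left_mono)
  also have "\<dots> \<le> L * inverse L" using True assms by (intro mult_right_mono) auto
  also have "\<dots> = 1" using assms by simp
  finally show ?thesis by simp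
next
  case False
  show ?thesis
  proof (cases "\<mu> = 0")
    case True then show ?thesis by simp
  next
    case F2: False
    then have neg: "\<mu> < 0" using False by simp
    have "\<mu> * x < \<mu> * inverse l" using neg assms by (simp add: mult_strict_left_mono_neg)
    also have "\<dots> \<le> l * inverse l" using neg assms by (intro mult_right_mono_neg) auto
    also have "\<dots> = 1" using assms by simp
    finally show ?thesis by simp
  qed
qed
lemma c_pos_R:
  fixes L \<mu> :: real
  assumes "0 < L" "\<mu> < L"
  shows "0 < 1 - \<mu> * inverse L"
proof -
  have "\<mu> * inverse L < L * inverse L" using assms by (intro mult_strict_right_mono) auto
  then show ?thesis using assms by simp
qed
lemma c_pos_l:
  fixes l \<mu> :: real
  assumes "l < 0" "l < \<mu>"
  shows "0 < 1 - \<mu> * inverse l"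
proof -
  have "\<mu> * inverse l < l * inverse l" using assms by (intro mult_strict_right_mono_neg) auto
  then show ?thesis using assms by simp
qed

lemma endpoint:
  fixes A :: "real^'n::finite^'n"
  assumes sym: "transpose A = A" and m0: "\<mu>0 \<in> mat_spectrum A" and m0P: "\<mu>0 \<notin> Lp A"
    and m0x: "1 - \<mu>0 * x = 0" and gs: "0 \<le> - gW A x / \<mu>0"
    and cpos: "\<forall>\<mu>\<in>Lp A. 0 < 1 - \<mu> * x"
  shows "\<exists>u. 1 \<bullet> u = u \<bullet> u \<and> u \<bullet> (A *v u) = 0 \<and> u \<bullet> u = fW A x"
proof -
  obtain y where y: "y \<noteq> 0" "A *v y = \<mu>0 *\<^sub>R y" using m0 unfolding mat_spectrum_def by blast
  have mu0: "\<mu>0 \<noteq> 0" using m0x by auto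
  define t where "t = sqrt (- gW A x / \<mu>0) / norm y"
  define z where "z = t *\<^sub>R y"
  have yE: "y \<in> eigenspace A \<mu>0" using y unfolding eigenspace_def by simp
  have zE: "z \<in> eigenspace A \<mu>0" unfolding z_def using yE subspace_eigenspace subspace_scale by blast
  have zA: "A *v z = \<mu>0 *\<^sub>R z" using zE unfolding eigenspace_def by simp
  have zz: "z \<bullet> z = - gW A x / \<mu>0"
  proof -
    have "z \<bullet> z = t^2 * (norm y)^2" unfolding z_def
      by (simp add: power2_norm_eq_inner[symmetric] power2_eq_square)
    also have "\<dots> = - gW A x / \<mu>0" unfolding t_def using y gs
      by (simp add: power_divide real_sqrt_pow2)
    finally show ?thesis .
  qed
  have w0: "spec_weight A \<mu>0 = 0" using m0 m0P unfolding Lp_def by auto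
  have z1: "1 \<bullet> z = 0" using spec_proj_inner[OF zE, of 1] spec_weight_zero[OF w0] by simp
  have ze: "\<forall>\<mu>\<in>Lp A. spec_proj A \<mu> 1 \<bullet> z = 0"
  proof
    fix \<mu> assume "\<mu> \<in> Lp A"
    then have "\<mu> \<noteq> \<mu>0" using m0P by blast
    then show "spec_proj A \<mu> 1 \<bullet> z = 0" using eig_orth[OF sym spec_proj_in zE] by blast
  qed
  have zc: "(1 - \<mu>0 * x) * (z \<bullet> z) = 0" using m0x by simp
  have zg: "gW A x + \<mu>0 * (z \<bullet> z) = 0" using zz mu0 by simp
  show ?thesis by (rule construct[OF sym cpos zA z1 ze zc zg])
qed

lemma hW_cont: "continuous_on S (hW A)"
  unfolding hW_def by (intro continuous_intros)

lemma hW_eq: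
  fixes A :: "real^'n::finite^'n"
  assumes sym: "transpose A = A" and cn: "\<forall>\<nu>\<in>Lp A. 1 - \<nu> * x \<noteq> 0"
  shows "hW A x = gW A x * (\<Prod>\<nu>\<in>Lp A. (1 - \<nu> * x)^2)"
proof -
  have finP: "finite (Lp A)" using finite_Lp[OF sym] .
  have "hW A x = (\<Sum>\<mu>\<in>Lp A. \<mu> * spec_weight A \<mu> / (1 - \<mu> * x)^2 * (\<Prod>\<nu>\<in>Lp A. (1 - \<nu> * x)^2))"
    unfolding hW_def
  proof (rule sum.cong[OF refl])
    fix \<mu> assume m: "\<mu> \<in> Lp A"
    have "(\<Prod>\<nu>\<in>Lp A. (1 - \<nu> * x)^2) = (1 - \<mu> * x)^2 * (\<Prod>\<nu>\<in>Lp A - {\<mu>}. (1 - \<nu> * x)^2)"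
      using prod.remove[OF finP m] by simp
    then show "\<mu> * spec_weight A \<mu> * (\<Prod>\<nu>\<in>Lp A - {\<mu>}. (1 - \<nu> * x)^2) =
        \<mu> * spec_weight A \<mu> / (1 - \<mu> * x)^2 * (\<Prod>\<nu>\<in>Lp A. (1 - \<nu> * x)^2)"
      using cn m by simp
  qed
  also have "\<dots> = gW A x * (\<Prod>\<nu>\<in>Lp A. (1 - \<nu> * x)^2)"
    unfolding gW_def by (simp add: sum_distrib_right)
  finally show ?thesis .
qed

lemma hW_pole:
  fixes A :: "real^'n::finite^'n"
  assumes sym: "transpose A = A" and m0: "\<mu>0 \<in> Lp A" and z: "1 - \<mu>0 * x = 0"
  shows "hW A x = \<mu>0 * spec_weight A \<mu>0 * (\<Prod>\<nu>\<in>Lp A - {\<mu>0}. (1 - \<nu> * x)^2)"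
proof -
  have finP: "finite (Lp A)" using finite_Lp[OF sym] .
  have "hW A x = \<mu>0 * spec_weight A \<mu>0 * (\<Prod>\<nu>\<in>Lp A - {\<mu>0}. (1 - \<nu> * x)^2)
      + (\<Sum>\<mu>\<in>Lp A - {\<mu>0}. \<mu> * spec_weight A \<mu> * (\<Prod>\<nu>\<in>Lp A - {\<mu>}. (1 - \<nu> * x)^2))"
    unfolding hW_def using sum.remove[OF finP m0] by simp
  also have "(\<Sum>\<mu>\<in>Lp A - {\<mu>0}. \<mu> * spec_weight A \<mu> * (\<Prod>\<nu>\<in>Lp A - {\<mu>}. (1 - \<nu> * x)^2)) = 0"
  proof (rule sum.neutral, rule ballI)
    fix \<mu> assume "\<mu> \<in> Lp A - {\<mu>0}"
    then have "\<mu>0 \<in> Lp A - {\<mu>}" using m0 by blast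
    then have "(\<Prod>\<nu>\<in>Lp A - {\<mu>}. (1 - \<nu> * x)^2) = 0"
      using finP z by (intro prod_zero) auto
    then show "\<mu> * spec_weight A \<mu> * (\<Prod>\<nu>\<in>Lp A - {\<mu>}. (1 - \<nu> * x)^2) = 0" by simp
  qed
  finally show ?thesis by simp
qed

lemma prod_sq_pos:
  assumes "\<And>\<nu>. \<nu> \<in> S \<Longrightarrow> 0 < (f \<nu>::real)"
  shows "0 < (\<Prod>\<nu>\<in>S. (f \<nu>)^2)"
proof (rule prod_pos)
  fix \<nu> assume "\<nu> \<in> S"
  then have "0 < f \<nu>" using assms by blast
  then show "0 < (f \<nu>)^2" by simp
qed

lemma strong:
  fixes A :: "real^'n::finite^'n"
  assumes sym: "transpose A = A"
    and l0: "l < 0" and L0: "0 < L"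
    and bnd: "\<forall>\<mu>\<in>mat_spectrum A. l \<le> \<mu> \<and> \<mu> \<le> L"
    and lin: "l \<in> mat_spectrum A" and Lin: "L \<in> mat_spectrum A"
  shows "\<exists>x\<in>{inverse l..inverse L}. (\<forall>\<mu>\<in>Lp A. 0 < 1 - \<mu> * x) \<and>
           (\<exists>u. 1 \<bullet> u = u \<bullet> u \<and> u \<bullet> (A *v u) = 0 \<and> u \<bullet> u = fW A x)"
proof -
  define a where "a = inverse l"
  define b where "b = inverse L"
  have ab: "a < 0" "0 < b" using l0 L0 a_def b_def by auto
  have PL: "Lp A \<subseteq> mat_spectrum A" unfolding Lp_def by blast
  have finP: "finite (Lp A)" using finite_Lp[OF sym] .
  have wpos: "0 < spec_weight A \<mu>" if "\<mu> \<in> Lp A" for \<mu>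
    using that spec_weight_nonneg[of A \<mu>] unfolding Lp_def by auto
  have cb: "0 < 1 - \<mu> * b" if "\<mu> \<in> Lp A" "\<mu> \<noteq> L" for \<mu>
    using that bnd PL c_pos_R[OF L0, of \<mu>] b_def by force
  have ca: "0 < 1 - \<mu> * a" if "\<mu> \<in> Lp A" "\<mu> \<noteq> l" for \<mu>
    using that bnd PL c_pos_l[OF l0, of \<mu>] a_def by force
  have Lb: "1 - L * b = 0" using L0 b_def by simp
  have la: "1 - l * a = 0" using l0 a_def by simp
  show ?thesis
  proof (cases "L \<notin> Lp A \<and> gW A b \<le> 0")
    case True
    have cp: "\<forall>\<mu>\<in>Lp A. 0 < 1 - \<mu> * b" using cb True by blast
    have "0 \<le> - gW A b / L" using True L0 divide_nonpos_pos[of "gW A b" L] by simp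
    from endpoint[OF sym Lin _ Lb this cp] True cp ab show ?thesis
      unfolding a_def[symmetric] b_def[symmetric] by auto
  next
    case nb: False
    show ?thesis
    proof (cases "l \<notin> Lp A \<and> 0 \<le> gW A a")
      case True
      have cp: "\<forall>\<mu>\<in>Lp A. 0 < 1 - \<mu> * a" using ca True by blast
      have "0 \<le> - gW A a / l" using True l0 divide_nonneg_neg[of "gW A a" l] by simp
      from endpoint[OF sym lin _ la this cp] True cp ab show ?thesis
        unfolding a_def[symmetric] b_def[symmetric] by auto
    next
      case na: False
      have hb: "0 < hW A b"
      proof (cases "L \<in> Lp A")
        case True
        have "0 < (\<Prod>\<nu>\<in>Lp A - {L}. (1 - \<nu> * b)^2)"
          using cb by (intro prod_sq_pos) auto
        then show ?thesis using hW_pole[OF sym True Lb] wpos[OF True] L0 by simp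
      next
        case False
        then have g: "0 < gW A b" using nb by simp
        have cp: "\<forall>\<mu>\<in>Lp A. 0 < 1 - \<mu> * b" using cb False by blast
        have "0 < (\<Prod>\<nu>\<in>Lp A. (1 - \<nu> * b)^2)" using cp by (intro prod_sq_pos) auto
        have "\<forall>\<nu>\<in>Lp A. 1 - \<nu> * b \<noteq> 0" using cp by force
        then show ?thesis using hW_eq[OF sym, of b] g \<open>0 < (\<Prod>\<nu>\<in>Lp A. (1 - \<nu> * b)^2)\<close> by simp
      qed
      have ha: "hW A a < 0"
      proof (cases "l \<in> Lp A")
        case True
        have "0 < (\<Prod>\<nu>\<in>Lp A - {l}. (1 - \<nu> * a)^2)"
          using ca by (intro prod_sq_pos) auto
        then show ?thesis using hW_pole[OF sym True la] wpos[OF True] l0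
          by (simp add: mult_neg_pos)
      next
        case False
        then have g: "gW A a < 0" using na by simp
        have cp: "\<forall>\<mu>\<in>Lp A. 0 < 1 - \<mu> * a" using ca False by blast
        have "0 < (\<Prod>\<nu>\<in>Lp A. (1 - \<nu> * a)^2)" using cp by (intro prod_sq_pos) auto
        have "\<forall>\<nu>\<in>Lp A. 1 - \<nu> * a \<noteq> 0" using cp by force
        then show ?thesis using hW_eq[OF sym, of a] g \<open>0 < (\<Prod>\<nu>\<in>Lp A. (1 - \<nu> * a)^2)\<close> by (simp add: mult_neg_pos)
      qed
      obtain x where x: "a \<le> x" "x \<le> b" "hW A x = 0"
        using IVT'[of "hW A" a 0 b] ha hb ab hW_cont by force
      have xa: "a < x" using x ha by (cases "x = a") auto
      have xb: "x < b" using x hb by (cases "x = b") auto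
      have cp: "\<forall>\<mu>\<in>mat_spectrum A. 0 < 1 - \<mu> * x"
        using c_pos[OF l0 L0] bnd xa xb a_def b_def by blast
      then have cpP: "\<forall>\<mu>\<in>Lp A. 0 < 1 - \<mu> * x" using PL by blast
      have "0 < (\<Prod>\<nu>\<in>Lp A. (1 - \<nu> * x)^2)" using cpP by (intro prod_sq_pos) auto
      moreover have "hW A x = gW A x * (\<Prod>\<nu>\<in>Lp A. (1 - \<nu> * x)^2)"
        using hW_eq[OF sym, of x] cpP by force
      ultimately have g0: "gW A x = 0" using x by simp
      have "\<exists>u. 1 \<bullet> u = u \<bullet> u \<and> u \<bullet> (A *v u) = 0 \<and> u \<bullet> u = fW A x"
        by (rule construct[OF sym cpP, of 0 0]) (use g0 in auto)
      then show ?thesis using cpP x unfolding a_def b_def by auto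
    qed
  qed
qed

lemma one_inner_one: "(1::real^'n::finite) \<bullet> 1 = real CARD('n)"
  by (simp add: inner_vec_def)

lemma per_A:
  fixes A :: "real^'n::finite^'n"
  assumes wa: "weighted_adj E A"
  shows "Sup {ereal ((norm v)\<^sup>2) | v. v \<in> S_set \<and> v \<bullet> (A *v v) = 0} = W_min A"
proof -
  let ?S = "{ereal ((norm v)\<^sup>2) | v. v \<in> S_set \<and> v \<bullet> (A *v v) = 0}"
  have sym: "transpose A = A" and diag: "\<forall>i. A $ i $ i = 0" using wa unfolding weighted_adj_def by auto
  have Sv: "v \<in> S_set \<longleftrightarrow> 1 \<bullet> v = v \<bullet> v" for v :: "real^'n"
    unfolding S_set_def by (simp add: power2_norm_eq_inner)
  show ?thesis
  proof (cases "A = 0")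
    case True
    have "Sup ?S \<le> ereal (real CARD('n))"
    proof (rule Sup_least)
      fix s assume "s \<in> ?S"
      then obtain v where v0: "s = ereal ((norm v)\<^sup>2)" "v \<in> S_set" "v \<bullet> (A *v v) = 0" by blast
      then have v: "s = ereal ((norm v)\<^sup>2)" "1 \<bullet> v = v \<bullet> v" using Sv by auto
      have "(norm v)^2 \<le> norm (1::real^'n) * norm v"
        using v(2) norm_cauchy_schwarz[of 1 v] by (simp add: power2_norm_eq_inner)
      then have "norm v \<le> norm (1::real^'n)"
        by (cases "norm v = 0") (auto simp: power2_eq_square)
      then have "(norm v)^2 \<le> (norm (1::real^'n))^2" by (simp add: power_mono)
      then show "s \<le> ereal (real CARD('n))" using v(1)
        by (simp add: power2_norm_eq_inner one_inner_one)
    qed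
    moreover have "ereal (real CARD('n)) \<in> ?S"
    proof -
      have "(1::real^'n) \<in> S_set" using Sv by simp
      moreover have "ereal (real CARD('n)) = ereal ((norm (1::real^'n))\<^sup>2)"
        by (simp add: power2_norm_eq_inner one_inner_one)
      ultimately show ?thesis using True by auto
    qed
    ultimately have "Sup ?S = ereal (real CARD('n))"
      by (simp add: Sup_upper antisym)
    then show ?thesis using True unfolding W_min_def by simp
  next
    case A0: False
    let ?L = "mat_spectrum A"
    have fin: "finite ?L" using finite_spectrum[OF sym] .
    obtain \<mu>n where mn: "\<mu>n \<in> ?L" "\<mu>n < 0" using spectrum_signs(1)[OF sym diag A0] by blast
    obtain \<mu>p where mp: "\<mu>p \<in> ?L" "\<mu>p > 0" using spectrum_signs(2)[OF sym diag A0] by blast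
    have ne: "?L \<noteq> {}" using mn by blast
    define l where "l = lambda_min A"
    define L where "L = lambda_max A"
    have lin: "l \<in> ?L" unfolding l_def lambda_min_def using Min_in[OF fin ne] .
    have Lin: "L \<in> ?L" unfolding L_def lambda_max_def using Max_in[OF fin ne] .
    have bnd: "\<forall>\<mu>\<in>?L. l \<le> \<mu> \<and> \<mu> \<le> L" unfolding l_def L_def lambda_min_def lambda_max_def
      using fin by auto
    have l0: "l < 0" using bnd mn by force
    have L0: "0 < L" using bnd mp by force
    have Wm: "W_min A = Inf (W_fun A ` {inverse l..inverse L})"
      using A0 unfolding W_min_def l_def L_def by simp
    have le: "Sup ?S \<le> W_min A"
      unfolding Wm
    proof (rule Sup_least)
      fix s assume "s \<in> ?S"
      then obtain v where v0: "s = ereal ((norm v)\<^sup>2)" "v \<in> S_set" "v \<bullet> (A *v v) = 0"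
        by blast
      then have v: "s = ereal ((norm v)\<^sup>2)" "1 \<bullet> v = v \<bullet> v" "v \<bullet> (A *v v) = 0"
        using Sv by auto
      show "s \<le> Inf (W_fun A ` {inverse l..inverse L})"
      proof (rule INF_greatest)
        fix x assume x: "x \<in> {inverse l..inverse L}"
        have cnn: "\<forall>\<mu>\<in>?L. 0 \<le> 1 - \<mu> * x"
          using c_nonneg[OF l0 L0] bnd x by auto
        show "s \<le> W_fun A x" using weak[OF sym cnn v(2,3)] v(1)
          by (simp add: power2_norm_eq_inner)
      qed
    qed
    obtain x u where x: "x \<in> {inverse l..inverse L}" and cp: "\<forall>\<mu>\<in>Lp A. 0 < 1 - \<mu> * x"
      and u: "1 \<bullet> u = u \<bullet> u" "u \<bullet> (A *v u) = 0" "u \<bullet> u = fW A x"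
      using strong[OF sym l0 L0 bnd lin Lin] by blast
    have "W_min A \<le> W_fun A x" unfolding Wm using x by (rule INF_lower)
    also have "\<dots> = ereal ((norm u)\<^sup>2)" using W_fun_eq[OF cp] u(3)
      by (simp add: power2_norm_eq_inner)
    also have "\<dots> \<le> Sup ?S" using u Sv by (intro Sup_upper) blast
    finally show ?thesis using le by simp
  qed
qed

theorem lemma2:
  fixes E :: "'n::finite \<Rightarrow> 'n \<Rightarrow> bool"
  assumes "simple_graph E"
  shows "alpha_S E = (INF A\<in>{A. weighted_adj E A}. W_min A)"
  unfolding alpha_S_def using per_A by (intro INF_cong) auto

end
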